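(* Let $A$ be a separable Banach algebra with $A^2=A$ and $\Phi_A\neq\emptyset$. Then $\inf\{\|\phi\|:\phi\in\Phi_A\}>0$.
   Context: $A^2$ denotes the linear span of all products $ab$, $a,b\in A$. $\Phi_A$ is the set of nonzero multiplicative linear functionals (characters) on $A$, and $\|\phi\|$ is the norm of $\phi$ as a functional on $A$. *)

theory Defs
  imports "HOL-Analysis.Analysis"
begin

text \<open>Complex Banach algebras (not necessarily unital or commutative):
  a real Banach algebra carrying a compatible complex scalar multiplication.\<close>

class complex_banach_algebra = real_normed_algebra + banach +
  fixes scaleC :: "complex \<Rightarrow> 'a \<Rightarrow> 'a"
  assumes scaleC_add_right: "scaleC c (x + y) = scaleC c x + scaleC c y"
    and scaleC_add_left: "scaleC (c + d) x = scaleC c x + scaleC d x"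
    and scaleC_scaleC: "scaleC c (scaleC d x) = scaleC (c * d) x"
    and scaleC_one: "scaleC 1 x = x"
    and scaleC_of_real: "scaleC (complex_of_real r) x = r *\<^sub>R x"
    and norm_scaleC: "norm (scaleC c x) = cmod c * norm x"
    and scaleC_left_mult: "scaleC c (x * y) = scaleC c x * y"
    and scaleC_right_mult: "scaleC c (x * y) = x * scaleC c y"

definition cspan :: "'a::complex_banach_algebra set \<Rightarrow> 'a set" where
  "cspan S = {x. \<exists>T c. finite T \<and> T \<subseteq> S \<and> x = (\<Sum>t\<in>T. scaleC (c t) t)}"

definition square_span :: "'a::complex_banach_algebra set" where
  "square_span = cspan {a * b | a b. True}"

definition characters :: "('a::complex_banach_algebra \<Rightarrow> complex) set" where
  "characters = {\<phi>. (\<forall>x y. \<phi> (x + y) = \<phi> x + \<phi> y)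
                   \<and> (\<forall>c x. \<phi> (scaleC c x) = c * \<phi> x)
                   \<and> (\<forall>x y. \<phi> (x * y) = \<phi> x * \<phi> y)
                   \<and> (\<exists>x. \<phi> x \<noteq> 0)}"

definition separable_space :: "'a::metric_space itself \<Rightarrow> bool" where
  "separable_space _ \<longleftrightarrow> (\<exists>D::'a set. countable D \<and> closure D = UNIV)"

end

theory Submission
  imports Defs
begin

lemma char_add: "\<phi> \<in> characters \<Longrightarrow> \<phi> (x + y) = \<phi> x + \<phi> y"
  by (simp add: characters_def)
lemma char_scaleC: "\<phi> \<in> characters \<Longrightarrow> \<phi> (scaleC c x) = c * \<phi> x"
  by (simp add: characters_def)
lemma char_mult: "\<phi> \<in> characters \<Longrightarrow> \<phi> (x * y) = \<phi> x * \<phi> y"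
  by (simp add: characters_def)

lemma char_zero: "\<phi> \<in> characters \<Longrightarrow> \<phi> 0 = 0"
  using char_add[of \<phi> 0 0] by simp

lemma char_scaleR: "\<phi> \<in> characters \<Longrightarrow> \<phi> (r *\<^sub>R x) = complex_of_real r * \<phi> x"
  by (metis char_scaleC scaleC_of_real)

lemma char_minus: "\<phi> \<in> characters \<Longrightarrow> \<phi> (- x) = - \<phi> x"
  using char_scaleR[of \<phi> "-1" x] by simp

lemma char_diff: "\<phi> \<in> characters \<Longrightarrow> \<phi> (x - y) = \<phi> x - \<phi> y"
  by (metis char_add char_minus diff_conv_add_uminus)

lemma char_sum: "\<phi> \<in> characters \<Longrightarrow> \<phi> (\<Sum>t\<in>T. f t) = (\<Sum>t\<in>T. \<phi> (f t))"
  by (induction T rule: infinite_finite_induct) (auto simp: char_zero char_add)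

lemma char_linear: "\<phi> \<in> characters \<Longrightarrow> linear \<phi>"
  by (rule linearI) (auto simp: char_add char_scaleR scaleR_conv_of_real)

primrec pw :: "'a::complex_banach_algebra \<Rightarrow> nat \<Rightarrow> 'a" where
  "pw b 0 = b"
| "pw b (Suc n) = b * pw b n"

lemma norm_pw: "norm (pw b n) \<le> norm b ^ Suc n"
proof (induction n)
  case (Suc n)
  have "norm (pw b (Suc n)) \<le> norm b * norm (pw b n)" by (simp add: norm_mult_ineq)
  also have "\<dots> \<le> norm b * norm b ^ Suc n" using Suc by (simp add: mult_left_mono)
  finally show ?case by simp
qed simp

lemma char_le_norm:
  assumes phi: "\<phi> \<in> characters"
  shows "norm (\<phi> a) \<le> norm a"
proof (rule ccontr)
  assume "\<not> ?thesis"
  hence lt: "norm a < norm (\<phi> a)" by simp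
  hence nz: "\<phi> a \<noteq> 0" by (metis norm_ge_zero norm_zero not_le order.strict_trans2)
  define b where "b = scaleC (1 / \<phi> a) a"
  have pb: "\<phi> b = 1" using nz by (simp add: b_def char_scaleC[OF phi])
  have nb: "norm b < 1" using lt nz by (simp add: b_def norm_scaleC norm_divide divide_less_eq)
  have sg: "summable (\<lambda>n. norm b ^ Suc n)"
    using nb by (simp add: summable_geometric)
  have sm: "summable (pw b)"
  proof (rule summable_comparison_test[OF _ sg])
    show "\<exists>N. \<forall>n\<ge>N. norm (pw b n) \<le> norm b ^ Suc n"
      using norm_pw[of b] by blast
  qed
  define c where "c = suminf (pw b)"
  have "(\<lambda>n. pw b (Suc n)) sums (c - pw b 0)"
    by (subst sums_Suc_iff) (simp add: c_def summable_sums[OF sm])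
  moreover have "(\<lambda>n. pw b (Suc n)) sums (b * c)"
    using sums_mult[OF summable_sums[OF sm], of b] by (simp add: c_def)
  ultimately have "b * c = c - b" by (simp add: sums_unique2)
  hence "\<phi> (b * c) = \<phi> (c - b)" by simp
  hence "\<phi> c = \<phi> c - 1" by (simp add: char_mult[OF phi] char_diff[OF phi] pb)
  thus False by simp
qed

lemma char_bl: "\<phi> \<in> characters \<Longrightarrow> bounded_linear \<phi>"
  by (rule bounded_linear_intro[where K=1]) (auto simp: char_add char_scaleR scaleR_conv_of_real char_le_norm)

definition Sn :: "nat \<Rightarrow> 'a::complex_banach_algebra set" where
  "Sn n = {x. \<exists>(T::'a set) f g. finite T \<and> card T \<le> n \<and>
      (\<forall>t\<in>T. norm (f t) \<le> real n \<and> norm (g t) \<le> real n) \<and> x = (\<Sum>t\<in>T. f t * g t)}"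

lemma Sn_cover:
  assumes "(square_span :: 'a::complex_banach_algebra set) = UNIV"
  shows "(\<Union>n. Sn n) = (UNIV :: 'a set)"
proof -
  { fix x :: 'a
    have "x \<in> cspan {a * b | a b. True}" using assms by (simp add: square_span_def)
    then obtain T c where T: "finite T" "T \<subseteq> {a * b | a b. True}"
      and x: "x = (\<Sum>t\<in>T. scaleC (c t) t)" unfolding cspan_def by blast
    define p where "p t = (SOME q. t = fst q * snd q)" for t :: 'a
    have p: "t = fst (p t) * snd (p t)" if "t \<in> T" for t
    proof -
      from that T obtain a b where "t = a * b" by blast
      hence "\<exists>q. t = fst q * snd q" by (metis fst_conv snd_conv)
      thus ?thesis unfolding p_def by (rule someI_ex)
    qed
    define f where "f t = scaleC (c t) (fst (p t))" for t
    define g where "g t = snd (p t)" for t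
    have fg: "f t * g t = scaleC (c t) t" if "t \<in> T" for t
    proof -
      have "scaleC (c t) t = scaleC (c t) (fst (p t) * snd (p t))" using p[OF that] by simp
      thus ?thesis by (simp add: f_def g_def scaleC_left_mult)
    qed
    obtain n1 :: nat where n1: "(\<Sum>t\<in>T. norm (f t) + norm (g t)) \<le> real n1"
      using real_arch_simple by blast
    define n where "n = max n1 (card T)"
    have "norm (f t) \<le> real n \<and> norm (g t) \<le> real n" if "t \<in> T" for t
    proof -
      have "norm (f t) + norm (g t) \<le> (\<Sum>t\<in>T. norm (f t) + norm (g t))"
        using member_le_sum[of t T "\<lambda>t. norm (f t) + norm (g t)"] T(1) that by simp
      moreover have "real n1 \<le> real n" by (simp add: n_def)
      ultimately show ?thesis using n1 by (smt (verit) norm_ge_zero)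
    qed
    moreover have "x = (\<Sum>t\<in>T. f t * g t)" using x fg by simp
    moreover have "card T \<le> n" by (simp add: n_def)
    ultimately have "x \<in> Sn n" unfolding Sn_def using T(1) by blast
    hence "x \<in> (\<Union>n. Sn n)" by blast }
  thus ?thesis by blast
qed

lemma char_on_Sn:
  fixes x :: "'a::complex_banach_algebra"
  assumes phi: "\<phi> \<in> characters" and x: "x \<in> Sn n"
  shows "norm (\<phi> x) \<le> real n ^ 3 * onorm \<phi> ^ 2"
proof -
  have bl: "bounded_linear \<phi>" by (rule char_bl[OF phi])
  define K where "K = onorm \<phi>"
  have K0: "0 \<le> K" unfolding K_def by (rule onorm_pos_le[OF bl])
  from x have "\<exists>(T::'a set) f g. finite T \<and> card T \<le> n \<and>
      (\<forall>t\<in>T. norm (f t) \<le> real n \<and> norm (g t) \<le> real n) \<and> x = (\<Sum>t\<in>T. f t * g t)"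
    by (simp add: Sn_def)
  then obtain T :: "'a set" and f g where H: "finite T \<and> card T \<le> n \<and>
      (\<forall>t\<in>T. norm (f t) \<le> real n \<and> norm (g t) \<le> real n) \<and> x = (\<Sum>t\<in>T. f t * g t)"
    by (elim exE) iprover
  have T: "finite T" "card T \<le> n" using H by simp_all
  have b: "\<And>t. t \<in> T \<Longrightarrow> norm (f t) \<le> real n \<and> norm (g t) \<le> real n" using H by simp
  have xe: "x = (\<Sum>t\<in>T. f t * g t)" using H by simp
  have "norm (\<phi> x) = norm (\<Sum>t\<in>T. \<phi> (f t) * \<phi> (g t))"
    by (simp add: xe char_sum[OF phi] char_mult[OF phi])
  also have "\<dots> \<le> (\<Sum>t\<in>T. norm (\<phi> (f t)) * norm (\<phi> (g t)))"
    by (rule order_trans[OF norm_sum]) (simp add: norm_mult)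
  also have "\<dots> \<le> (\<Sum>t\<in>T. (K * real n) * (K * real n))"
  proof (rule sum_mono)
    fix t assume t: "t \<in> T"
    have a1: "norm (\<phi> (f t)) \<le> K * norm (f t)" unfolding K_def by (rule onorm[OF bl])
    have a2: "K * norm (f t) \<le> K * real n" using b[OF t] K0 by (intro mult_left_mono) auto
    have c1: "norm (\<phi> (g t)) \<le> K * norm (g t)" unfolding K_def by (rule onorm[OF bl])
    have c2: "K * norm (g t) \<le> K * real n" using b[OF t] K0 by (intro mult_left_mono) auto
    have a: "norm (\<phi> (f t)) \<le> K * real n" using a1 a2 by (rule order_trans)
    have c: "norm (\<phi> (g t)) \<le> K * real n" using c1 c2 by (rule order_trans)
    show "norm (\<phi> (f t)) * norm (\<phi> (g t)) \<le> (K * real n) * (K * real n)"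
      by (rule mult_mono[OF a c]) (use K0 in auto)
  qed
  also have "\<dots> = real (card T) * (K * real n) * (K * real n)" by simp
  also have "\<dots> \<le> real n * (K * real n) * (K * real n)"
  proof -
    have "real (card T) \<le> real n" using T(2) by simp
    hence "real (card T) * (K * real n) \<le> real n * (K * real n)"
      by (rule mult_right_mono) (use K0 in auto)
    thus ?thesis by (rule mult_right_mono) (use K0 in auto)
  qed
  also have "\<dots> = real n ^ 3 * K ^ 2" by (simp add: power2_eq_square power3_eq_cube)
  finally show ?thesis by (simp add: K_def)
qed

theorem proposition3p10:
  assumes "separable_space TYPE('a::complex_banach_algebra)"
    and "(square_span :: 'a set) = UNIV"
    and "(characters :: ('a \<Rightarrow> complex) set) \<noteq> {}"
  shows "(INF \<phi> \<in> (characters :: ('a \<Rightarrow> complex) set). onorm \<phi>) > 0"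
proof -
  have cov: "(\<Union>n. closure (Sn n :: 'a set)) = UNIV"
    using Sn_cover[OF assms(2)] closure_subset by blast
  have "\<exists>n. interior (closure (Sn n :: 'a set)) \<noteq> {}"
  proof (rule ccontr)
    assume "\<not> ?thesis"
    hence "euclidean interior_of (\<Union> (range (\<lambda>n. closure (Sn n :: 'a set)))) = {}"
      by (intro Baire_category_alt) (auto simp: completely_metrizable_space_euclidean)
    thus False using cov by simp
  qed
  then obtain n x0 where "x0 \<in> interior (closure (Sn n :: 'a set))" by blast
  then obtain r where r: "r > 0" "ball x0 r \<subseteq> closure (Sn n)"
    by (meson open_contains_ball_eq open_interior interior_subset subset_trans)
  define \<delta> where "\<delta> = r / (4 * (real n ^ 3 + 1))"
  have d0: "\<delta> > 0" unfolding \<delta>_def using r(1)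
    by (intro divide_pos_pos) (auto intro: add_nonneg_pos)
  have lb: "\<delta> \<le> onorm \<phi>" if phi: "\<phi> \<in> characters" for \<phi> :: "'a \<Rightarrow> complex"
  proof -
    have bl: "bounded_linear \<phi>" by (rule char_bl[OF phi])
    define K where "K = onorm \<phi>"
    define M where "M = (real n ^ 3 + 1) * K ^ 2"
    have K0: "0 < K" unfolding K_def using phi onorm_pos_lt[OF bl]
      by (auto simp: characters_def)
    have M0: "0 \<le> M" unfolding M_def by (simp add: add_nonneg_nonneg)
    have "Sn n \<subseteq> {x. norm (\<phi> x) \<le> M}"
    proof
      fix x :: 'a assume "x \<in> Sn n"
      hence "norm (\<phi> x) \<le> real n ^ 3 * K ^ 2" using char_on_Sn[OF phi] by (simp add: K_def)
      also have "\<dots> \<le> M" unfolding M_def by (simp add: distrib_right)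
      finally show "x \<in> {x. norm (\<phi> x) \<le> M}" by simp
    qed
    moreover have "closed {x. norm (\<phi> x) \<le> M}"
      by (intro closed_Collect_le continuous_intros linear_continuous_on[OF bl])
    ultimately have cl: "closure (Sn n) \<subseteq> {x. norm (\<phi> x) \<le> M}"
      by (rule closure_minimal)
    have small: "norm (\<phi> y) \<le> 2 * M" if "norm y < r" for y
    proof -
      have "x0 + y \<in> ball x0 r" "x0 \<in> ball x0 r" using that r(1) by (auto simp: dist_norm)
      hence "x0 + y \<in> {x. norm (\<phi> x) \<le> M}" "x0 \<in> {x. norm (\<phi> x) \<le> M}"
        using r(2) cl by (meson subsetD)+
      hence "norm (\<phi> (x0 + y)) \<le> M" "norm (\<phi> x0) \<le> M" by simp_all
      moreover have "\<phi> y = \<phi> (x0 + y) - \<phi> x0" by (simp add: char_add[OF phi])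
      moreover have "norm (\<phi> (x0 + y) - \<phi> x0) \<le> norm (\<phi> (x0 + y)) + norm (\<phi> x0)"
        by (rule norm_triangle_ineq4)
      ultimately show ?thesis by simp
    qed
    have bnd: "norm (\<phi> z) \<le> (4 * M / r) * norm z" for z
    proof (cases "z = 0")
      case True thus ?thesis by (simp add: char_zero[OF phi])
    next
      case False
      define s where "s = r / (2 * norm z)"
      have s0: "s > 0" using False r(1) by (simp add: s_def)
      have "norm (s *\<^sub>R z) = r / 2" using False s0 r(1) by (simp add: s_def)
      hence "norm (\<phi> (s *\<^sub>R z)) \<le> 2 * M" using small r(1) by simp
      hence "s * norm (\<phi> z) \<le> 2 * M" using s0 by (simp add: char_scaleR[OF phi] norm_mult)
      thus ?thesis using False r(1) by (simp add: s_def field_simps)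
    qed
    have "K \<le> 4 * M / r" unfolding K_def
      by (rule onorm_bound) (use M0 r(1) bnd in auto)
    hence "K * r \<le> 4 * (real n ^ 3 + 1) * K * K" using r(1) by (simp add: M_def field_simps power2_eq_square)
    hence "r \<le> 4 * (real n ^ 3 + 1) * K" using K0 by (simp add: mult.commute mult.left_commute)
    moreover have pos: "0 < 4 * (real n ^ 3 + 1)" by (simp add: add_nonneg_pos)
    ultimately show ?thesis unfolding \<delta>_def K_def
      by (simp only: pos_divide_le_eq[OF pos] mult.commute)
  qed
  have "\<delta> \<le> (INF \<phi> \<in> (characters :: ('a \<Rightarrow> complex) set). onorm \<phi>)"
    using assms(3) lb by (intro cINF_greatest) auto
  thus ?thesis using d0 by linarith
qed

end
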